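(* Let $\mathcal{G}_R$ be the class of all finite reflexive graphs and let $G\in\mathcal{G}_R$ be a reflexive graph not isomorphic to $N_{n,k}$ for any natural numbers $n,k$ with $2k\le n$. Then the class $\mathrm{Av}(G)=\{H\in\mathcal{G}_R: G\not\preceq H\}$, with respect to the strong homomorphic image ordering $\preceq$, is not well quasi-ordered.
   Context: A reflexive graph is a set with a symmetric edge relation having a loop at every vertex. A homomorphism maps edges to edges; it is strong if additionally every edge of the target between vertices of the image is the image of an edge. Strong homomorphic image ordering: $A\preceq B$ iff there is a surjective strong homomorphism $B\to A$. For $2k\le n$, $N_{n,k}$ is the reflexive graph on $\{1,\dots,n\}$ with all pairs of distinct vertices adjacent except $\{1,2\},\{3,4\},\dots,\{2k-1,2k\}$. Well quasi-ordered means no infinite strictly decreasing sequence and no infinite antichain; graphs considered up to isomorphism. *)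

theory Defs
  imports Main
begin

text \<open>A finite graph is represented by a vertex set of naturals and an edge relation
  on it (every finite graph is isomorphic to one of this form).\<close>
type_synonym rgraph = "nat set \<times> (nat \<Rightarrow> nat \<Rightarrow> bool)"

definition verts :: "rgraph \<Rightarrow> nat set" where "verts G = fst G"
definition edge :: "rgraph \<Rightarrow> nat \<Rightarrow> nat \<Rightarrow> bool" where "edge G = snd G"

definition reflexive_graph :: "rgraph \<Rightarrow> bool" where
  "reflexive_graph G \<longleftrightarrow> finite (verts G)
     \<and> (\<forall>x y. edge G x y \<longrightarrow> x \<in> verts G \<and> y \<in> verts G)
     \<and> (\<forall>x y. edge G x y \<longrightarrow> edge G y x)
     \<and> (\<forall>x \<in> verts G. edge G x x)"

definition hom :: "rgraph \<Rightarrow> rgraph \<Rightarrow> (nat \<Rightarrow> nat) \<Rightarrow> bool" where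
  "hom G H f \<longleftrightarrow> (\<forall>x \<in> verts G. f x \<in> verts H)
     \<and> (\<forall>x y. edge G x y \<longrightarrow> edge H (f x) (f y))"

definition strong_hom :: "rgraph \<Rightarrow> rgraph \<Rightarrow> (nat \<Rightarrow> nat) \<Rightarrow> bool" where
  "strong_hom G H f \<longleftrightarrow> hom G H f
     \<and> (\<forall>u \<in> f ` verts G. \<forall>v \<in> f ` verts G. edge H u v \<longrightarrow>
          (\<exists>x y. edge G x y \<and> f x = u \<and> f y = v))"

definition shi_le :: "rgraph \<Rightarrow> rgraph \<Rightarrow> bool" where
  "shi_le A B \<longleftrightarrow> (\<exists>f. strong_hom B A f \<and> f ` verts B = verts A)"

definition graph_iso :: "rgraph \<Rightarrow> rgraph \<Rightarrow> bool" where
  "graph_iso G H \<longleftrightarrow> (\<exists>f. bij_betw f (verts G) (verts H)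
     \<and> (\<forall>x \<in> verts G. \<forall>y \<in> verts G. edge G x y \<longleftrightarrow> edge H (f x) (f y)))"

definition N_graph :: "nat \<Rightarrow> nat \<Rightarrow> rgraph" where
  "N_graph n k = ({1..n}, \<lambda>x y. x \<in> {1..n} \<and> y \<in> {1..n}
       \<and> \<not> (\<exists>i \<in> {1..k}. {x, y} = {2*i - 1, 2*i}))"

definition wqo_class :: "(rgraph \<Rightarrow> rgraph \<Rightarrow> bool) \<Rightarrow> rgraph set \<Rightarrow> bool" where
  "wqo_class P C \<longleftrightarrow>
     \<not> (\<exists>s. (\<forall>i. s i \<in> C) \<and> (\<forall>i. P (s (Suc i)) (s i) \<and> \<not> P (s i) (s (Suc i))))
   \<and> \<not> (\<exists>s::nat \<Rightarrow> rgraph. (\<forall>i. s i \<in> C) \<and> (\<forall>i j. i \<noteq> j \<longrightarrow> \<not> P (s i) (s j)))"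

end

theory Submission
  imports Defs
begin

definition Np :: "nat \<Rightarrow> nat \<Rightarrow> nat \<Rightarrow> bool" where
  "Np k a b \<longleftrightarrow> (\<exists>i\<in>{1..k}. {a, b} = {2*i - 1, 2*i})"

lemma Np_shift: assumes "a \<ge> 1" "b \<ge> 1" shows "Np (Suc k) (a+2) (b+2) \<longleftrightarrow> Np k a b"
proof
  assume "Np (Suc k) (a+2) (b+2)"
  then obtain i where i: "i \<in> {1..Suc k}" "{a+2, b+2} = {2*i - 1, 2*i}" unfolding Np_def by blast
  have "i \<ge> 2" using i assms by (auto simp: doubleton_eq_iff)
  then have "{a, b} = {2*(i-1) - 1, 2*(i-1)}" using i by (auto simp: doubleton_eq_iff)
  then show "Np k a b" using i \<open>i \<ge> 2\<close> unfolding Np_def by (intro bexI[of _ "i - 1"]) auto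
next
  assume "Np k a b"
  then obtain i where i: "i \<in> {1..k}" "{a, b} = {2*i - 1, 2*i}" unfolding Np_def by blast
  then have "{a+2, b+2} = {2*(i+1) - 1, 2*(i+1)}" by (auto simp: doubleton_eq_iff)
  then show "Np (Suc k) (a+2) (b+2)" using i unfolding Np_def by (intro bexI[of _ "i + 1"]) auto
qed

lemma Np_1: "b \<ge> 1 \<Longrightarrow> Np (Suc k) 1 b \<longleftrightarrow> b = 2"
  unfolding Np_def by (auto simp: doubleton_eq_iff intro: bexI[of _ 1])

lemma Np_2: "b \<ge> 1 \<Longrightarrow> Np (Suc k) 2 b \<longleftrightarrow> b = 1"
  unfolding Np_def by (auto simp: doubleton_eq_iff intro: bexI[of _ 1]; presburger)

lemma Np_big: "2*k \<le> n \<Longrightarrow> \<not> Np k (Suc n) b"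
  unfolding Np_def by (auto simp: doubleton_eq_iff)

lemma Np_sym: "Np k a b \<longleftrightarrow> Np k b a"
  unfolding Np_def by (simp add: insert_commute)

lemma Np_irrefl: "\<not> Np k a a"
  unfolding Np_def by (auto simp: doubleton_eq_iff)

lemma Np_unique: "Np k x y \<Longrightarrow> Np k x z \<Longrightarrow> y = z"
  unfolding Np_def by (auto simp: doubleton_eq_iff; presburger)

lemma Np_partner: assumes "x \<in> {1..2*m}" shows "\<exists>y\<in>{1..2*m}. Np m x y"
proof (cases "odd x")
  case True
  then obtain j where j: "x = 2*j+1" by (auto elim: oddE)
  have "Suc j \<in> {1..m}" using assms j by auto
  moreover have "{x, x+1} = {2*Suc j - 1, 2*Suc j}" using j by auto
  moreover have "x+1 \<in> {1..2*m}" using assms j by auto presburger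
  ultimately show ?thesis unfolding Np_def by blast
next
  case False
  then obtain j where j: "x = 2*j" by (auto elim: evenE)
  have "j \<in> {1..m}" "x-1 \<in> {1..2*m}" using assms j by auto
  moreover have "{x, x-1} = {2*j - 1, 2*j}" using j by auto
  ultimately show ?thesis unfolding Np_def by blast
qed
lemma step_pair:
  assumes uv: "u \<in> V" "v \<in> V" "u \<noteq> v"
    and Eu: "\<And>y. y \<in> V \<Longrightarrow> E u y \<longleftrightarrow> y \<noteq> v"
    and Ev: "\<And>y. y \<in> V \<Longrightarrow> E v y \<longleftrightarrow> y \<noteq> u"
    and sym: "\<forall>x y. E x y \<longrightarrow> E y x"
    and g: "2*k \<le> n" "bij_betw g (V - {u,v}) {1..n}"
           "\<forall>x\<in>V-{u,v}. \<forall>y\<in>V-{u,v}. E x y \<longleftrightarrow> \<not> Np k (g x) (g y)"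
  shows "\<exists>n k f. 2*k \<le> n \<and> bij_betw f V {1..n} \<and> (\<forall>x\<in>V. \<forall>y\<in>V. E x y \<longleftrightarrow> \<not> Np k (f x) (f y))"
proof -
  have img: "g ` (V - {u,v}) = {1..n}" and inj: "inj_on g (V - {u,v})"
    using g(2) by (auto simp: bij_betw_def)
  define f where "f = (\<lambda>x. if x = u then 1 else if x = v then 2 else g x + (2::nat))"
  have gge: "x \<in> V - {u,v} \<Longrightarrow> g x \<ge> 1" for x using img by force
  have fo: "x \<in> V - {u,v} \<Longrightarrow> f x = g x + 2" for x by (auto simp: f_def)
  have fu: "f u = 1" and fv: "f v = 2" using uv by (auto simp: f_def)
  have "inj_on f V"
  proof (rule inj_onI)
    fix x y assume xy: "x \<in> V" "y \<in> V" "f x = f y"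
    show "x = y"
    proof (cases "x \<in> {u,v}")
      case xin: True
      show ?thesis
      proof (cases "y \<in> {u,v}")
        case True
        then show ?thesis using xin xy(3) fu fv by auto
      next
        case False
        then have "y \<in> V - {u,v}" using xy by blast
        then have "f y \<ge> 3" using gge[of y] fo[of y] by linarith
        moreover have "f x \<le> 2" using xin fu fv by auto
        ultimately show ?thesis using xy(3) by simp
      qed
    next
      case xout: False
      then have xV: "x \<in> V - {u,v}" using xy by blast
      show ?thesis
      proof (cases "y \<in> {u,v}")
        case True
        have "f x \<ge> 3" using gge[OF xV] fo[OF xV] by linarith
        moreover have "f y \<le> 2" using True fu fv by auto
        ultimately show ?thesis using xy(3) by simp
      next
        case False
        then have yV: "y \<in> V - {u,v}" using xy by blast
        have "g x = g y" using xy(3) fo[OF xV] fo[OF yV] by simp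
        then show ?thesis using inj xV yV by (meson inj_onD)
      qed
    qed
  qed
  moreover have "f ` V = {1..n+2}"
  proof
    show "f ` V \<subseteq> {1..n+2}"
    proof
      fix z assume "z \<in> f ` V"
      then obtain x where x: "x \<in> V" "z = f x" by blast
      show "z \<in> {1..n+2}"
      proof (cases "x \<in> {u,v}")
        case True then show ?thesis using x fu fv by auto
      next
        case False
        then have "g x \<in> {1..n}" using img x by blast
        then show ?thesis using fo x False by auto
      qed
    qed
  next
    show "{1..n+2} \<subseteq> f ` V"
    proof
      fix z assume z: "z \<in> {1..n+2}"
      show "z \<in> f ` V"
      proof (cases "z \<le> 2")
        case True
        then have "z = 1 \<or> z = 2" using z by auto
        then show ?thesis using fu fv uv by (metis image_eqI)
      next
        case False
        then have "z - 2 \<in> {1..n}" using z by auto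
        then obtain x where "x \<in> V - {u,v}" "g x = z - 2" using img by (metis imageE)
        moreover have "f x = z" using calculation fo False by auto
        ultimately show ?thesis by blast
      qed
    qed
  qed
  ultimately have bij: "bij_betw f V {1..n+2}" by (simp add: bij_betw_def)
  have fge: "f z \<ge> 1" if "z \<in> V" for z using gge that fo fu fv by (cases "z \<in> {u,v}") auto
  have f2: "f y = 2 \<longleftrightarrow> y = v" if "y \<in> V" for y
  proof (cases "y \<in> {u,v}")
    case True then show ?thesis using fu fv by auto
  next
    case False
    then have "y \<in> V - {u,v}" using that by blast
    then have "f y \<ge> 3" using gge[of y] fo[of y] by linarith
    then show ?thesis using False by auto
  qed
  have f1: "f y = 1 \<longleftrightarrow> y = u" if "y \<in> V" for y
  proof (cases "y \<in> {u,v}")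
    case True then show ?thesis using fu fv uv(3) by auto
  next
    case False
    then have "y \<in> V - {u,v}" using that by blast
    then have "f y \<ge> 3" using gge[of y] fo[of y] by linarith
    then show ?thesis using False by auto
  qed
  have eU: "E u y \<longleftrightarrow> \<not> Np (Suc k) (f u) (f y)" if "y \<in> V" for y
  proof -
    have "Np (Suc k) (f u) (f y) \<longleftrightarrow> f y = 2" unfolding fu using Np_1[OF fge[OF that]] .
    then show ?thesis using f2[OF that] Eu[OF that] by simp
  qed
  have eV: "E v y \<longleftrightarrow> \<not> Np (Suc k) (f v) (f y)" if "y \<in> V" for y
  proof -
    have "Np (Suc k) (f v) (f y) \<longleftrightarrow> f y = 1" unfolding fv using Np_2[OF fge[OF that]] .
    then show ?thesis using f1[OF that] Ev[OF that] by simp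
  qed
  have edges: "E x y \<longleftrightarrow> \<not> Np (Suc k) (f x) (f y)" if xy: "x \<in> V" "y \<in> V" for x y
  proof (cases "x \<in> {u,v}")
    case True
    then show ?thesis using eU[OF xy(2)] eV[OF xy(2)] by blast
  next
    case xF: False
    show ?thesis
    proof (cases "y \<in> {u,v}")
      case True
      then have "E y x \<longleftrightarrow> \<not> Np (Suc k) (f y) (f x)" using eU[OF xy(1)] eV[OF xy(1)] by blast
      moreover have "E x y \<longleftrightarrow> E y x" using sym by blast
      moreover have "Np (Suc k) (f y) (f x) \<longleftrightarrow> Np (Suc k) (f x) (f y)" by (rule Np_sym)
      ultimately show ?thesis by simp
    next
      case False
      then have xV: "x \<in> V - {u,v}" and yV: "y \<in> V - {u,v}" using xF xy by auto
      have "E x y \<longleftrightarrow> \<not> Np k (g x) (g y)" using g(3) xV yV by blast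
      moreover have "Np (Suc k) (g x + 2) (g y + 2) \<longleftrightarrow> Np k (g x) (g y)"
        by (rule Np_shift[OF gge[OF xV] gge[OF yV]])
      ultimately show ?thesis using fo[OF xV] fo[OF yV] by simp
    qed
  qed
  show ?thesis using bij edges g(1)
    by (intro exI[of _ "n+2"] exI[of _ "Suc k"] exI[of _ f]) auto
qed

lemma step_single:
  assumes s: "s \<in> V" "\<And>y. y \<in> V \<Longrightarrow> E s y"
    and sym: "\<forall>x y. E x y \<longrightarrow> E y x"
    and g: "2*k \<le> n" "bij_betw g (V - {s}) {1..n}"
           "\<forall>x\<in>V-{s}. \<forall>y\<in>V-{s}. E x y \<longleftrightarrow> \<not> Np k (g x) (g y)"
  shows "\<exists>n k f. 2*k \<le> n \<and> bij_betw f V {1..n} \<and> (\<forall>x\<in>V. \<forall>y\<in>V. E x y \<longleftrightarrow> \<not> Np k (f x) (f y))"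
proof -
  define f where "f = g(s := Suc n)"
  have img: "g ` (V - {s}) = {1..n}" and inj: "inj_on g (V - {s})"
    using g(2) by (auto simp: bij_betw_def)
  have fo: "x \<in> V - {s} \<Longrightarrow> f x = g x" for x by (auto simp: f_def)
  have fs: "f s = Suc n" by (simp add: f_def)
  have gle: "x \<in> V - {s} \<Longrightarrow> g x \<le> n" for x using img by force
  have "inj_on f V"
  proof (rule inj_onI)
    fix x y assume xy: "x \<in> V" "y \<in> V" "f x = f y"
    show "x = y"
    proof (cases "x = s")
      case True
      show ?thesis
      proof (rule ccontr)
        assume "x \<noteq> y"
        then have "y \<in> V - {s}" using True xy by blast
        then show False using gle[of y] fo[of y] xy(3) True fs by simp
      qed
    next
      case False
      then have xV: "x \<in> V - {s}" using xy by blast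
      show ?thesis
      proof (cases "y = s")
        case True
        then show ?thesis using gle[OF xV] fo[OF xV] xy(3) fs by simp
      next
        case False
        then have yV: "y \<in> V - {s}" using xy by blast
        have "g x = g y" using xy(3) fo[OF xV] fo[OF yV] by simp
        then show ?thesis using inj xV yV by (meson inj_onD)
      qed
    qed
  qed
  moreover have "f ` V = {1..Suc n}"
  proof -
    have "V = insert s (V - {s})" using s by blast
    then have "f ` V = insert (f s) (f ` (V - {s}))" by (metis image_insert)
    also have "f ` (V - {s}) = g ` (V - {s})" using fo by (rule image_cong[OF refl])
    finally show ?thesis using img fs by auto
  qed
  ultimately have bij: "bij_betw f V {1..Suc n}" by (simp add: bij_betw_def)
  have nb: "\<not> Np k (Suc n) b" for b using Np_big[OF g(1)] .
  have edges: "E x y \<longleftrightarrow> \<not> Np k (f x) (f y)" if xy: "x \<in> V" "y \<in> V" for x y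
  proof (cases "x = s \<or> y = s")
    case True
    then have "E x y" using s xy sym by blast
    moreover have "\<not> Np k (f x) (f y)" using True nb Np_sym fs by metis
    ultimately show ?thesis by simp
  next
    case False
    then have xV: "x \<in> V - {s}" and yV: "y \<in> V - {s}" using xy by auto
    show ?thesis using g(3) xV yV fo[OF xV] fo[OF yV] by simp
  qed
  show ?thesis using bij edges g(1)
    by (intro exI[of _ "Suc n"] exI[of _ k] exI[of _ f]) auto
qed

lemma iso_exists:
  assumes "finite V" "\<forall>x y. E x y \<longrightarrow> E y x"
  shows "(\<forall>x\<in>V. E x x) \<Longrightarrow>
   (\<forall>x\<in>V. \<forall>y\<in>V. \<forall>z\<in>V. y \<noteq> x \<longrightarrow> z \<noteq> x \<longrightarrow> \<not>E x y \<longrightarrow> \<not>E x z \<longrightarrow> y = z) \<Longrightarrow>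
   \<exists>n k f. 2*k \<le> n \<and> bij_betw f V {1..n} \<and> (\<forall>x\<in>V. \<forall>y\<in>V. E x y \<longleftrightarrow> \<not> Np k (f x) (f y))"
  using assms(1)
proof (induction V rule: finite_psubset_induct)
  case (psubset V)
  have P2: "y = z" if "x \<in> V" "y \<in> V" "z \<in> V" "y \<noteq> x" "z \<noteq> x" "\<not>E x y" "\<not>E x z" for x y z
    using psubset.prems(2) that by blast
  have P1: "E x x" if "x \<in> V" for x using psubset.prems(1) that by blast
  show ?case
  proof (cases "V = {}")
    case True
    then show ?thesis by (intro exI[of _ 0] exI[of _ "0::nat"]) (auto simp: bij_betw_def)
  next
    case nonempty: False
    show ?thesis
    proof (cases "\<exists>s\<in>V. \<forall>y\<in>V. E s y")
      case True
      then obtain s where s: "s \<in> V" "\<forall>y\<in>V. E s y" by blast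
      have sub: "V - {s} \<subset> V" using s by auto
      have p1: "\<forall>x\<in>V-{s}. E x x" using P1 by simp
      have p2: "\<forall>x\<in>V-{s}. \<forall>y\<in>V-{s}. \<forall>z\<in>V-{s}. y \<noteq> x \<longrightarrow> z \<noteq> x \<longrightarrow> \<not>E x y \<longrightarrow> \<not>E x z \<longrightarrow> y = z"
        using P2 by (meson DiffD1)
      obtain n k g where
        g: "2*k \<le> n" "bij_betw g (V - {s}) {1..n}"
           "\<forall>x\<in>V-{s}. \<forall>y\<in>V-{s}. E x y \<longleftrightarrow> \<not> Np k (g x) (g y)"
        using psubset.IH[OF sub p1 p2] by blast
      show ?thesis by (rule step_single[OF s(1) _ assms(2) g]) (use s(2) in blast)
    next
      case False
      then obtain u where u: "u \<in> V" using nonempty by blast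
      then obtain v where v: "v \<in> V" "\<not> E u v" using False by blast
      have vu: "u \<noteq> v" using v P1 u by blast
      have sub: "V - {u, v} \<subset> V" using u by auto
      have p1: "\<forall>x\<in>V-{u,v}. E x x" using P1 by simp
      have p2: "\<forall>x\<in>V-{u,v}. \<forall>y\<in>V-{u,v}. \<forall>z\<in>V-{u,v}. y \<noteq> x \<longrightarrow> z \<noteq> x \<longrightarrow> \<not>E x y \<longrightarrow> \<not>E x z \<longrightarrow> y = z"
        using P2 by (meson DiffD1)
      obtain n k g where
        g: "2*k \<le> n" "bij_betw g (V - {u,v}) {1..n}"
           "\<forall>x\<in>V-{u,v}. \<forall>y\<in>V-{u,v}. E x y \<longleftrightarrow> \<not> Np k (g x) (g y)"
        using psubset.IH[OF sub p1 p2] by blast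
      have Eu: "E u y \<longleftrightarrow> y \<noteq> v" if y: "y \<in> V" for y
      proof
        assume "E u y" then show "y \<noteq> v" using v by blast
      next
        assume "y \<noteq> v"
        show "E u y"
        proof (rule ccontr)
          assume "\<not> E u y"
          have "y \<noteq> u" using \<open>\<not> E u y\<close> P1 y by blast
          then show False using P2[OF u y v(1) _ _ \<open>\<not> E u y\<close> v(2)] vu \<open>y \<noteq> v\<close> by blast
        qed
      qed
      have nvu: "\<not> E v u" using v assms(2) by blast
      have Ev: "E v y \<longleftrightarrow> y \<noteq> u" if y: "y \<in> V" for y
      proof
        assume "E v y" then show "y \<noteq> u" using nvu by blast
      next
        assume "y \<noteq> u"
        show "E v y"
        proof (rule ccontr)
          assume "\<not> E v y"
          have "y \<noteq> v" using \<open>\<not> E v y\<close> P1 y by blast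
          then show False using P2[OF v(1) y u _ _ \<open>\<not> E v y\<close> nvu] vu \<open>y \<noteq> u\<close> by blast
        qed
      qed
      show ?thesis by (rule step_pair[OF u v(1) vu Eu Ev assms(2) g])
    qed
  qed
qed

lemma verts_N: "verts (N_graph n k) = {1..n}" by (simp add: N_graph_def verts_def)
lemma edge_N: "edge (N_graph n k) x y \<longleftrightarrow> x \<in> {1..n} \<and> y \<in> {1..n} \<and> \<not> Np k x y"
  by (simp add: N_graph_def edge_def Np_def)

lemma refl_N: "reflexive_graph (N_graph n k)"
  unfolding reflexive_graph_def verts_N edge_N using Np_sym Np_irrefl by auto

lemma N_unique:
  assumes "x \<in> verts (N_graph n k)" "y \<in> verts (N_graph n k)" "z \<in> verts (N_graph n k)"
    "y \<noteq> x" "z \<noteq> x" "\<not> edge (N_graph n k) x y" "\<not> edge (N_graph n k) x z"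
  shows "y = z"
  using assms Np_unique unfolding verts_N edge_N by blast

lemma shi_le_N_prop:
  assumes "shi_le A (N_graph n k)" "u \<in> verts A" "v \<in> verts A" "w \<in> verts A"
    "v \<noteq> u" "w \<noteq> u" "\<not> edge A u v" "\<not> edge A u w"
  shows "v = w"
proof -
  let ?H = "N_graph n k"
  obtain f where f: "strong_hom ?H A f" "f ` verts ?H = verts A"
    using assms(1) unfolding shi_le_def by blast
  have hom: "\<And>x y. edge ?H x y \<Longrightarrow> edge A (f x) (f y)" using f(1)
    unfolding strong_hom_def hom_def by blast
  obtain x where x: "x \<in> verts ?H" "f x = u" using f(2) assms(2) by (metis imageE)
  obtain y where y: "y \<in> verts ?H" "f y = v" using f(2) assms(3) by (metis imageE)
  obtain z where z: "z \<in> verts ?H" "f z = w" using f(2) assms(4) by (metis imageE)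
  have "\<not> edge ?H x y" using hom assms(7) x y by metis
  moreover have "\<not> edge ?H x z" using hom assms(8) x z by metis
  moreover have "y \<noteq> x" "z \<noteq> x" using x y z assms(5,6) by auto
  ultimately have "y = z" using N_unique x(1) y(1) z(1) by blast
  then show ?thesis using y z by simp
qed

lemma not_le_N:
  assumes G: "reflexive_graph G" and le: "shi_le G (N_graph m j)"
  shows "\<exists>n k. 2 * k \<le> n \<and> graph_iso G (N_graph n k)"
proof -
  have fin: "finite (verts G)" and inV: "\<And>x y. edge G x y \<Longrightarrow> x \<in> verts G \<and> y \<in> verts G"
    and sym: "\<forall>x y. edge G x y \<longrightarrow> edge G y x" and refl: "\<forall>x\<in>verts G. edge G x x"
    using G unfolding reflexive_graph_def by blast+
  have pr: "\<forall>x\<in>verts G. \<forall>y\<in>verts G. \<forall>z\<in>verts G. y \<noteq> x \<longrightarrow> z \<noteq> x \<longrightarrow> \<not>edge G x y \<longrightarrow> \<not>edge G x z \<longrightarrow> y = z"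
    using shi_le_N_prop[OF le] by blast
  obtain n k f where nk: "2*k \<le> n" "bij_betw f (verts G) {1..n}"
    "\<forall>x\<in>verts G. \<forall>y\<in>verts G. edge G x y \<longleftrightarrow> \<not> Np k (f x) (f y)"
    using iso_exists[OF fin sym refl pr] by blast
  have "graph_iso G (N_graph n k)"
    unfolding graph_iso_def verts_N
  proof (intro exI conjI ballI)
    show "bij_betw f (verts G) {1..n}" by (rule nk(2))
  next
    fix x y assume xy: "x \<in> verts G" "y \<in> verts G"
    have "f x \<in> {1..n}" "f y \<in> {1..n}" using nk(2) xy by (auto simp: bij_betw_def)
    then show "edge G x y = edge (N_graph n k) (f x) (f y)" using nk(3) xy edge_N by auto
  qed
  then show ?thesis using nk(1) by blast
qed

lemma antichain_N:
  assumes "shi_le (N_graph (2*Suc i) (Suc i)) (N_graph (2*Suc j) (Suc j))"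
  shows "i = j"
proof -
  let ?H = "N_graph (2*Suc j) (Suc j)" and ?A = "N_graph (2*Suc i) (Suc i)"
  obtain f where f: "strong_hom ?H ?A f" "f ` verts ?H = verts ?A"
    using assms unfolding shi_le_def by blast
  have hom: "\<And>x y. edge ?H x y \<Longrightarrow> edge ?A (f x) (f y)" using f(1)
    unfolding strong_hom_def hom_def by blast
  have "inj_on f (verts ?H)"
  proof (rule inj_onI, rule ccontr)
    fix x y assume xy: "x \<in> verts ?H" "y \<in> verts ?H" "f x = f y" "x \<noteq> y"
    have "f x \<in> verts ?A" using f(2) xy(1) by blast
    then obtain u' where u': "u' \<in> {1..2*Suc i}" "Np (Suc i) (f x) u'"
      using Np_partner[of "f x" "Suc i"] unfolding verts_N by blast
    have ne: "u' \<noteq> f x" using u'(2) Np_irrefl by metis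
    have nedge: "\<not> edge ?A (f x) u'" using u'(2) edge_N by blast
    obtain z where z: "z \<in> verts ?H" "f z = u'" using f(2) u'(1) unfolding verts_N
      by (metis imageE)
    have "\<not> edge ?H x z" using hom nedge z(2) by metis
    moreover have "\<not> edge ?H y z" using hom nedge z(2) xy(3) by metis
    ultimately have "\<not> edge ?H z x" "\<not> edge ?H z y" using refl_N[of "2*Suc j" "Suc j"]
      unfolding reflexive_graph_def by blast+
    moreover have "x \<noteq> z" "y \<noteq> z" using z(2) ne xy(3) by auto
    ultimately have "x = y" using N_unique[OF z(1) xy(1) xy(2)] by blast
    then show False using xy(4) by simp
  qed
  then have "card (f ` verts ?H) = card (verts ?H)" by (rule card_image)
  then have "card {1..2*Suc i} = card {1..2*Suc j}" using f(2) unfolding verts_N by simp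
  then show ?thesis by simp
qed

theorem theorem3p5:
  assumes "reflexive_graph G"
    and "\<forall>n k. 2 * k \<le> n \<longrightarrow> \<not> graph_iso G (N_graph n k)"
  shows "\<not> wqo_class shi_le {H. reflexive_graph H \<and> \<not> shi_le G H}"
proof -
  define s where "s = (\<lambda>i. N_graph (2*Suc i) (Suc i))"
  have "\<forall>i. s i \<in> {H. reflexive_graph H \<and> \<not> shi_le G H}"
    using refl_N not_le_N[OF assms(1)] assms(2) unfolding s_def by blast
  moreover have "\<forall>i j. i \<noteq> j \<longrightarrow> \<not> shi_le (s i) (s j)"
    using antichain_N unfolding s_def by blast
  ultimately show ?thesis unfolding wqo_class_def by blast
qed

end
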